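(* Let $x\in\mathcal A^{\mathbb N}$ and let $\mathcal L=\mathcal L_x$ be the set of finite nonempty subwords of $x$. Let $w\in\mathcal L_n$ have minimal valid step $q$, and let $z=pw^{q\ast r}s$ and $z'=p'w^{q\ast r'}s'$ be exit words of $w$ with step $q$. If $z$ begins at position $i$ of $x$ and $z'$ begins at position $i'>i$ of $x$, then $i'\ge i+|z|-n$. Moreover, $|x_{[i,i'+|z'|-1]}|_w\ge r+r'$.
   Context: $|y|_w$ denotes the number of positions $j$, $1\le j\le |y|-|w|+1$, with $y_{[j,j+|w|-1]}=w$. For $n\ge 2$, $w\in\mathcal A^n$ and integer $1\le q\le n/2$ with $w_{[q+1,n]}=w_{[1,n-q]}$, $w^{q\ast r}$ is the word of length $n+(r-1)q$ with $(w^{q\ast r})_{[q(i-1)+1,q(i-1)+n]}=w$ for $1\le i\le r$; $q$ is valid for $w$ in $\mathcal L$ if moreover $w^{q\ast2}\in\mathcal L$; the minimal valid step is the least one. An exit word for $w$ with step $q$ is a word $z=pw^{q\ast r}s$, $r\ge1$, $1\le|p|,|s|\le q$, such that $z\in\mathcal L$; $pw^{q\ast r}$ is not a suffix of $w^{q\ast(r+1)}$ but $p_{[2,|p|]}w^{q\ast r}$ is; and $w^{q\ast r}s$ is not a prefix of $w^{q\ast(r+1)}$ but $w^{q\ast r}s_{[1,|s|-1]}$ is (with $p_{[2,1]}$, $s_{[1,0]}$ empty). *)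

theory Defs
  imports Main "HOL-Library.Sublist"
begin

text \<open>Infinite words are functions nat => 'a, positions start at 0.
  subword x i j is x_[i,j] (inclusive).\<close>

definition subword :: "(nat \<Rightarrow> 'a) \<Rightarrow> nat \<Rightarrow> nat \<Rightarrow> 'a list" where
  "subword x i j = map x [i..<Suc j]"

definition lang :: "(nat \<Rightarrow> 'a) \<Rightarrow> 'a list set" where
  "lang x = {subword x i j | i j. i \<le> j}"

text \<open>Number of occurrences |y|_w (positions 1-based in the paper, 0-based here).\<close>
definition occ :: "'a list \<Rightarrow> 'a list \<Rightarrow> nat" where
  "occ y w = card {j. j + length w \<le> length y \<and> take (length w) (drop j y) = w}"

definition step_ok :: "'a list \<Rightarrow> nat \<Rightarrow> bool" where
  "step_ok w q \<longleftrightarrow> 2 \<le> length w \<and> 1 \<le> q \<and> 2 * q \<le> length w \<and>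
     drop q w = take (length w - q) w"

definition wpow :: "'a list \<Rightarrow> nat \<Rightarrow> nat \<Rightarrow> 'a list" where
  "wpow w q r = (THE v. length v = length w + (r - 1) * q \<and>
      (\<forall>i\<in>{1..r}. take (length w) (drop (q * (i - 1)) v) = w))"

definition valid_step :: "'a list set \<Rightarrow> 'a list \<Rightarrow> nat \<Rightarrow> bool" where
  "valid_step L w q \<longleftrightarrow> step_ok w q \<and> wpow w q 2 \<in> L"

definition minimal_valid_step :: "'a list set \<Rightarrow> 'a list \<Rightarrow> nat \<Rightarrow> bool" where
  "minimal_valid_step L w q \<longleftrightarrow> valid_step L w q \<and> (\<forall>q'<q. \<not> valid_step L w q')"

definition exit_word :: "'a list set \<Rightarrow> 'a list \<Rightarrow> nat \<Rightarrow> 'a list \<Rightarrow> nat \<Rightarrow> 'a list \<Rightarrow> bool" where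
  "exit_word L w q p r s \<longleftrightarrow>
     1 \<le> r \<and> 1 \<le> length p \<and> length p \<le> q \<and> 1 \<le> length s \<and> length s \<le> q \<and>
     p @ wpow w q r @ s \<in> L \<and>
     \<not> suffix (p @ wpow w q r) (wpow w q (r + 1)) \<and>
     suffix (tl p @ wpow w q r) (wpow w q (r + 1)) \<and>
     \<not> prefix (wpow w q r @ s) (wpow w q (r + 1)) \<and>
     prefix (wpow w q r @ butlast s) (wpow w q (r + 1))"

end

theory Submission
  imports Defs
begin

lemma per_nth:
  assumes so: "step_ok w q" and "j < length w"
  shows "w ! j = w ! (j mod q)"
  using assms(2)
proof (induction j rule: less_induct)
  case (less j)
  from so have q1: "1 \<le> q" and qn: "2*q \<le> length w" and d: "drop q w = take (length w - q) w"
    by (auto simp: step_ok_def)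
  show ?case
  proof (cases "j < q")
    case True then show ?thesis by simp
  next
    case False
    have "w ! j = drop q w ! (j - q)" using False less.prems by simp
    also have "\<dots> = take (length w - q) w ! (j - q)" using d by simp
    also have "\<dots> = w ! (j - q)" using False less.prems by simp
    also have "\<dots> = w ! ((j - q) mod q)" using less.IH[of "j-q"] False less.prems q1 by simp
    also have "(j - q) mod q = j mod q" using False by (simp add: le_mod_geq)
    finally show ?thesis .
  qed
qed

lemma wpow_eq:
  assumes so: "step_ok w q" and r1: "1 \<le> r"
  shows "wpow w q r = map (\<lambda>j. w ! (j mod q)) [0..<length w + (r-1)*q]"
proof -
  from so have q1: "1 \<le> q" and qn: "2*q \<le> length w"
    by (auto simp: step_ok_def)
  let ?V = "map (\<lambda>j. w ! (j mod q)) [0..<length w + (r-1)*q]"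
  show ?thesis unfolding wpow_def
  proof (rule the_equality)
    show "length ?V = length w + (r - 1) * q \<and>
      (\<forall>i\<in>{1..r}. take (length w) (drop (q * (i - 1)) ?V) = w)"
    proof (intro conjI ballI)
      fix k assume k: "k \<in> {1..r}"
      have kq: "q*(k-1) \<le> (r-1)*q"
        by (metis k atLeastAtMost_iff diff_le_mono mult.commute mult_le_mono2)
      show "take (length w) (drop (q * (k - 1)) ?V) = w"
      proof (rule nth_equalityI)
        show "length (take (length w) (drop (q * (k - 1)) ?V)) = length w"
        proof -
          have "length w \<le> length w + (r-1)*q - q*(k-1)" using kq by linarith
          then show ?thesis by (simp only: length_take length_drop length_map length_upt min_absorb1) simp
        qed
        fix t assume "t < length (take (length w) (drop (q * (k - 1)) ?V))"
        then have t: "t < length w" by simp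
        have tl: "q*(k-1)+t < length w + (r-1)*q" using kq t by linarith
        have "take (length w) (drop (q * (k - 1)) ?V) ! t = ?V ! (q*(k-1)+t)"
          using t tl by (simp del: nth_map_upt)
        also have "\<dots> = w ! ((q*(k-1) + t) mod q)" using tl by (simp only: nth_map_upt) simp
        also have "\<dots> = w ! (t mod q)" by simp
        also have "\<dots> = w ! t" using per_nth[OF so t] by simp
        finally show "take (length w) (drop (q * (k - 1)) ?V) ! t = w ! t" .
      qed
    qed simp
  next
    fix v assume v: "length v = length w + (r - 1) * q \<and>
      (\<forall>i\<in>{1..r}. take (length w) (drop (q * (i - 1)) v) = w)"
    show "v = ?V"
    proof (rule nth_equalityI)
      show "length v = length ?V" using v by simp
      fix j assume "j < length v"
      then have j: "j < length w + (r-1)*q" using v by simp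
      define k where "k = min (j div q) (r-1)"
      have kr: "k+1 \<in> {1..r}" using r1 by (auto simp: k_def)
      have tk: "take (length w) (drop (q * k) v) = w" using v kr by fastforce
      have qkj: "q*k \<le> j" unfolding k_def
        by (metis min.cobounded1 mult.commute mult_le_mono1 div_times_less_eq_dividend order_trans)
      have jn: "j - q*k < length w"
      proof (cases "j div q \<le> r - 1")
        case True
        then have "k = j div q" by (simp add: k_def)
        then have "j - q*k = j mod q" by (simp add: minus_mult_div_eq_mod)
        moreover have "j mod q < q" using q1 by simp
        ultimately show ?thesis using qn by linarith
      next
        case False
        then have "k = r - 1" by (simp add: k_def)
        moreover have "(r-1)*q = q*k" using \<open>k = r - 1\<close> by simp
        ultimately show ?thesis using j by (metis add.commute less_diff_conv2 qkj)
      qed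
      have "v ! j = take (length w) (drop (q * k) v) ! (j - q*k)"
        using jn qkj \<open>j < length v\<close> by simp
      also have "\<dots> = w ! (j - q*k)" using tk by simp
      also have "\<dots> = w ! ((j - q*k) mod q)" using per_nth[OF so jn] .
      also have "(j - q*k) mod q = j mod q" using qkj
        by (metis add_diff_inverse_nat not_le mod_mult_self3 add.commute mult.commute)
      finally show "v ! j = ?V ! j" using j by simp
    qed
  qed
qed

lemma suffix_nth: "suffix u v \<Longrightarrow> m < length u \<Longrightarrow> u ! m = v ! (length v - length u + m)"
  by (auto simp: suffix_def nth_append)

lemma nth_suffix:
  assumes "length u \<le> length v" "\<forall>m<length u. u ! m = v ! (length v - length u + m)"
  shows "suffix u v"
proof -
  have "drop (length v - length u) v = u"
    by (rule nth_equalityI) (use assms in auto)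
  then have "v = take (length v - length u) v @ u" by (metis append_take_drop_id)
  then show ?thesis unfolding suffix_def by blast
qed

lemma prefix_nth': "prefix u v \<Longrightarrow> m < length u \<Longrightarrow> u ! m = v ! m"
  by (auto simp: prefix_def nth_append)

lemma nth_prefix:
  assumes "length u \<le> length v" "\<forall>m<length u. u ! m = v ! m"
  shows "prefix u v"
proof -
  have "take (length u) v = u"
    by (rule nth_equalityI) (use assms in auto)
  then have "v = u @ drop (length u) v" by (metis append_take_drop_id)
  then show ?thesis unfolding prefix_def by blast
qed


lemma subword_nth:
  assumes "subword x i (i + length z - 1) = z" "m < length z"
  shows "x (i + m) = z ! m"
proof -
  have "Suc (i + length z - 1) = i + length z" using assms(2) by simp
  then have "map x [i..<i + length z] = z" using assms(1) by (simp add: subword_def)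
  moreover have "map x [i..<i + length z] ! m = x (i + m)" using assms(2) by simp
  ultimately show ?thesis by simp
qed

lemma exit_facts:
  assumes so: "step_ok w q" and ex: "exit_word L w q p r s"
    and sub: "subword x i (i + length (p @ wpow w q r @ s) - 1) = p @ wpow w q r @ s"
  shows "length (p @ wpow w q r @ s) = length p + length w + (r-1)*q + length s"
    and "1 \<le> length p" "1 \<le> length s" "1 \<le> r"
    and "\<forall>t. i+1 \<le> t \<longrightarrow> t + q + 2 \<le> i + length (p @ wpow w q r @ s) \<longrightarrow> x t = x (t+q)"
    and "x i \<noteq> x (i+q)"
    and "x (i + length (p @ wpow w q r @ s) - 1) \<noteq> x (i + length (p @ wpow w q r @ s) - 1 - q)"
    and "\<forall>k<r. \<forall>t<length w. x (i + length p + q*k + t) = w ! t"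
proof -
  from so have q1: "1 \<le> q" and qn: "2*q \<le> length w"
    by (auto simp: step_ok_def)
  from ex have r1: "1 \<le> r" and a1: "1 \<le> length p" and aq: "length p \<le> q"
    and b1: "1 \<le> length s" and bq: "length s \<le> q"
    and nsuf: "\<not> suffix (p @ wpow w q r) (wpow w q (r + 1))"
    and suf: "suffix (tl p @ wpow w q r) (wpow w q (r + 1))"
    and npre: "\<not> prefix (wpow w q r @ s) (wpow w q (r + 1))"
    and pre: "prefix (wpow w q r @ butlast s) (wpow w q (r + 1))"
    by (auto simp: exit_word_def)
  define F where "F = (\<lambda>j. w ! (j mod q))"
  define n where "n = length w"
  define Lr where "Lr = n + (r-1)*q"
  define a where "a = length p"
  define b where "b = length s"
  define z where "z = p @ wpow w q r @ s"
  have W: "wpow w q r = map F [0..<Lr]" using wpow_eq[OF so r1] by (simp add: F_def Lr_def n_def)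
  have "(r + 1 - 1) * q = (r-1)*q + q" using r1 by (cases r) auto
  then have W': "wpow w q (Suc r) = map F [0..<Lr+q]" using wpow_eq[OF so, of "r+1"]
    by (simp add: F_def Lr_def n_def add.assoc)
  have lW0[simp]: "length (wpow w q r) = Lr" by (simp add: W)
  have lW1[simp]: "length (wpow w q (Suc r)) = Lr + q" by (simp add: W')
  have pne: "p \<noteq> []" and sne: "s \<noteq> []" using a1 b1 by auto
  have lz: "length z = a + Lr + b" by (simp add: z_def W a_def b_def)
  show "length (p @ wpow w q r @ s) = length p + length w + (r-1)*q + length s"
    using lz by (simp add: z_def a_def b_def Lr_def n_def)
  show "1 \<le> length p" "1 \<le> length s" "1 \<le> r" using a1 b1 r1 by auto
  have Fq: "\<And>j. F (j + q) = F j" by (simp add: F_def)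
  have xz: "\<And>m. m < length z \<Longrightarrow> x (i + m) = z ! m"
    using subword_nth[OF sub[folded z_def]] .
  have Lrn: "n \<le> Lr" by (simp add: Lr_def)
  have T1: "\<And>m. m < a - 1 + Lr \<Longrightarrow> (tl p @ wpow w q r) ! m = F (q - a + 1 + m)"
  proof -
    fix m assume m: "m < a - 1 + Lr"
    have "(tl p @ wpow w q r) ! m = wpow w q (r+1) ! (length (wpow w q (r+1)) - length (tl p @ wpow w q r) + m)"
      using suffix_nth[OF suf] m by (simp add: W a_def)
    also have "length (wpow w q (r+1)) - length (tl p @ wpow w q r) = q - a + 1"
      using a1 aq by (simp add: W W' a_def)
    finally show "(tl p @ wpow w q r) ! m = F (q - a + 1 + m)"
      using m a1 aq by (simp add: W' a_def)
  qed
  have pW: "\<And>m. 1 \<le> m \<Longrightarrow> (p @ wpow w q r) ! m = (tl p @ wpow w q r) ! (m - 1)"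
  proof -
    fix m :: nat assume "1 \<le> m"
    have "p = hd p # tl p" using a1 by (cases p) (auto simp: a_def)
    then have e: "p @ wpow w q r = hd p # (tl p @ wpow w q r)" by (metis append_Cons)
    obtain m' where "m = Suc m'" using \<open>1 \<le> m\<close> by (cases m) auto
    then show "(p @ wpow w q r) ! m = (tl p @ wpow w q r) ! (m - 1)"
      by (simp only: e nth_Cons_Suc diff_Suc_1)
  qed
  have p0: "p ! 0 \<noteq> F (q - a)"
  proof
    assume h: "p ! 0 = F (q - a)"
    have "suffix (p @ wpow w q r) (wpow w q (r + 1))"
    proof (rule nth_suffix)
      show "length (p @ wpow w q r) \<le> length (wpow w q (r + 1))"
        using aq by (simp add: W W' a_def)
      show "\<forall>m<length (p @ wpow w q r). (p @ wpow w q r) ! m =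
        wpow w q (r + 1) ! (length (wpow w q (r + 1)) - length (p @ wpow w q r) + m)"
      proof (intro allI impI)
        fix m assume m: "m < length (p @ wpow w q r)"
        have ll: "length (wpow w q (r + 1)) - length (p @ wpow w q r) = q - a"
          using aq by (simp add: W W' a_def)
        show "(p @ wpow w q r) ! m =
          wpow w q (r + 1) ! (length (wpow w q (r + 1)) - length (p @ wpow w q r) + m)"
        proof (cases "m = 0")
          case True
          then show ?thesis using h a1 aq ll pne by (simp add: W' a_def nth_append)
        next
          case False
          have "(p @ wpow w q r) ! m = F (q - a + 1 + (m - 1))"
            using pW[of m] T1[of "m-1"] False m by (simp add: W a_def)
          also have "q - a + 1 + (m - 1) = q - a + m" using False by simp
          finally show ?thesis using ll m aq by (simp add: W W' a_def)
        qed
      qed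
    qed
    with nsuf show False by simp
  qed
  have R1: "\<And>m. m < Lr + b - 1 \<Longrightarrow> (wpow w q r @ butlast s) ! m = F m"
  proof -
    fix m assume m: "m < Lr + b - 1"
    have "(wpow w q r @ butlast s) ! m = wpow w q (r+1) ! m"
      using prefix_nth'[OF pre] m by (simp add: W b_def)
    then show "(wpow w q r @ butlast s) ! m = F m" using m bq by (simp add: W' b_def)
  qed
  have sl: "s ! (b - 1) \<noteq> F (Lr + b - 1)"
  proof
    assume h: "s ! (b - 1) = F (Lr + b - 1)"
    have "prefix (wpow w q r @ s) (wpow w q (r + 1))"
    proof (rule nth_prefix)
      show "length (wpow w q r @ s) \<le> length (wpow w q (r + 1))"
        using bq by (simp add: W W' b_def)
      show "\<forall>m<length (wpow w q r @ s). (wpow w q r @ s) ! m = wpow w q (r + 1) ! m"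
      proof (intro allI impI)
        fix m assume m: "m < length (wpow w q r @ s)"
        show "(wpow w q r @ s) ! m = wpow w q (r + 1) ! m"
        proof (cases "m < Lr + b - 1")
          case True
          have "(wpow w q r @ s) ! m = (wpow w q r @ butlast s) ! m"
            using True by (simp add: W nth_append nth_butlast b_def)
          then show ?thesis using R1[OF True] True bq by (simp add: W' b_def)
        next
          case False
          then have "m = Lr + b - 1" using m by (simp add: W b_def)
          moreover have "\<not> (Lr + length s - 1 < Lr)" using b1 by linarith
          ultimately show ?thesis using h b1 bq sne by (simp add: W' nth_append b_def)
        qed
      qed
    qed
    with npre show False by simp
  qed
  define G where "G = (\<lambda>m. F (q - a + m))"
  have Gq: "\<And>m. G (m + q) = G m"
  proof -
    fix m have "q - a + (m + q) = (q - a + m) + q" by simp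
    then show "G (m + q) = G m" unfolding G_def using Fq[of "q - a + m"] by metis
  qed
  have xG: "\<And>m. 1 \<le> m \<Longrightarrow> m + 2 \<le> length z \<Longrightarrow> x (i + m) = G m"
  proof -
    fix m assume m1: "1 \<le> m" and m2: "m + 2 \<le> length z"
    have "x (i + m) = z ! m" using xz m2 by simp
    show "x (i + m) = G m"
    proof (cases "m < a + Lr")
      case True
      have zz: "z = (p @ wpow w q r) @ s" by (simp add: z_def)
      have "length (p @ wpow w q r) = a + Lr" by (simp add: a_def)
      then have "z ! m = (p @ wpow w q r) ! m" unfolding zz using True by (metis nth_append_left)
      also have "\<dots> = F (q - a + 1 + (m - 1))" using pW[OF m1] T1[of "m-1"] True m1 by simp
      also have "q - a + 1 + (m - 1) = q - a + m" using m1 by simp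
      finally show ?thesis using \<open>x (i + m) = z ! m\<close> by (simp add: G_def)
    next
      case False
      have zz: "z = (p @ wpow w q r) @ s" by (simp add: z_def)
      have "length (p @ wpow w q r) = a + Lr" by (simp add: a_def)
      then have "z ! m = s ! (m - a - Lr)" unfolding zz using False
        by (metis nth_append_right not_less diff_diff_left)
      also have "\<dots> = (wpow w q r @ butlast s) ! (m - a)"
      proof -
        have i1: "Lr \<le> m - a" using False by linarith
        have i2: "m - a - Lr < length s - 1" using False m2 lz by (simp add: b_def)
        have "(wpow w q r @ butlast s) ! (m - a) = butlast s ! (m - a - Lr)"
          using nth_append_right[of "wpow w q r" "m - a" "butlast s"] i1 by simp
        also have "\<dots> = s ! (m - a - Lr)" using nth_butlast[of "m - a - Lr" s] i2 by simp
        finally show ?thesis by simp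
      qed
      also have "\<dots> = F (m - a)" using R1[of "m-a"] False m2 lz by simp
      also have "F (m - a) = G m"
      proof -
        have "q - a + m = (m - a) + q" using False aq by (simp add: a_def)
        then show ?thesis unfolding G_def using Fq[of "m-a"] by metis
      qed
      finally show ?thesis using \<open>x (i + m) = z ! m\<close> by simp
    qed
  qed
  have x0: "x i \<noteq> G 0"
    using xz[of 0] p0 lz a1 pne by (simp add: G_def z_def nth_append a_def)
  have xe: "x (i + (length z - 1)) \<noteq> G (length z - 1)"
  proof -
    have "x (i + (length z - 1)) = z ! (length z - 1)" using xz[of "length z - 1"] lz b1 by (simp add: b_def)
    also have "\<dots> = s ! (b - 1)"
    proof -
      have zz: "z = (p @ wpow w q r) @ s" by (simp add: z_def)
      have "length (p @ wpow w q r) = a + Lr" by (simp add: a_def)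
      moreover have "length z - 1 - (a + Lr) = b - 1" using lz by simp
      ultimately show ?thesis unfolding zz using lz b1 nth_append_right[of "p @ wpow w q r" "length z - 1" s]
        by (simp add: zz)
    qed
    finally have e: "x (i + (length z - 1)) = s ! (b - 1)" .
    have "G (length z - 1) = F ((Lr + b - 1) + q)" using lz aq b1 by (simp add: G_def a_def b_def add.commute add.left_commute)
    then show ?thesis using e sl Fq by simp
  qed
  have lzq: "q + 2 \<le> length z"
  proof -
    have "1 \<le> a" "1 \<le> b" "2*q \<le> n" using a1 b1 qn by (auto simp: a_def b_def n_def)
    then show ?thesis using lz Lrn by linarith
  qed
  show "\<forall>t. i+1 \<le> t \<longrightarrow> t + q + 2 \<le> i + length (p @ wpow w q r @ s) \<longrightarrow> x t = x (t+q)"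
  proof (intro allI impI)
    fix t assume t1: "i + 1 \<le> t" and t2: "t + q + 2 \<le> i + length (p @ wpow w q r @ s)"
    define m where "m = t - i"
    have m: "t = i + m" "1 \<le> m" using t1 by (auto simp: m_def)
    have "x t = G m" using xG m t2 by (simp add: z_def)
    also have "\<dots> = G (m + q)" using Gq by simp
    also have "\<dots> = x (t + q)" using xG[of "m+q"] m t2 by (simp add: z_def add.assoc)
    finally show "x t = x (t+q)" .
  qed
  show "x i \<noteq> x (i+q)" using x0 xG[of q] q1 lzq Gq[of 0] by simp
  show "x (i + length (p @ wpow w q r @ s) - 1) \<noteq> x (i + length (p @ wpow w q r @ s) - 1 - q)"
  proof -
    have h1: "1 \<le> length z - 1 - q" and h2: "length z - 1 - q + 2 \<le> length z" using lzq q1 by linarith+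
    have "x (i + (length z - 1 - q)) = G (length z - 1 - q)" by (rule xG[OF h1 h2])
    also have "\<dots> = G (length z - 1)" using Gq[of "length z - 1 - q"] lzq by simp
    finally have "x (i + (length z - 1 - q)) = G (length z - 1)" .
    with xe have ne: "x (i + (length z - 1)) \<noteq> x (i + (length z - 1 - q))" by simp
    have e1: "i + length z - 1 - q = i + (length z - 1 - q)" using lzq by simp
    have e2: "i + length z - 1 = i + (length z - 1)" using lzq by simp
    have e3: "i + (length z - 1) - q = i + (length z - 1 - q)" using lzq by simp
    show ?thesis unfolding z_def[symmetric] e1 e2 e3 by (rule ne)
  qed
  show "\<forall>k<r. \<forall>t<length w. x (i + length p + q*k + t) = w ! t"
  proof (intro allI impI)
    fix k t assume k: "k < r" and t: "t < length w"
    have "k \<le> r - 1" using k by linarith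
    then have qk: "q*k \<le> (r-1)*q" by (metis mult.commute mult_le_mono2)
    have ab: "1 \<le> a" "1 \<le> b" using a1 b1 by (auto simp: a_def b_def)
    have h1: "1 \<le> a + q*k + t" using ab by linarith
    have h2: "a + q*k + t + 2 \<le> length z" using ab qk t lz unfolding Lr_def n_def by linarith
    have "x (i + (a + q*k + t)) = G (a + q*k + t)" by (rule xG[OF h1 h2])
    also have "\<dots> = w ! ((q*k + t + q) mod q)"
    proof -
      have "q - a + (a + q*k + t) = q*k + t + q" using aq by (simp add: a_def)
      then show ?thesis by (simp only: G_def F_def)
    qed
    also have "\<dots> = w ! t" using per_nth[OF so t] by simp
    finally show "x (i + length p + q*k + t) = w ! t" by (simp add: a_def add.assoc)
  qed
qed


lemma occ_mem:
  assumes "j + length w \<le> length y" "\<forall>t<length w. y ! (j+t) = w ! t"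
  shows "j \<in> {j. j + length w \<le> length y \<and> take (length w) (drop j y) = w}"
proof -
  have "take (length w) (drop j y) = w"
    by (rule nth_equalityI) (use assms in auto)
  then show ?thesis using assms by simp
qed

theorem mainTheorem15:
  fixes x :: "nat \<Rightarrow> 'a" and w p s p' s' :: "'a list" and q r r' i i' :: nat
  assumes "w \<in> lang x"
    and "minimal_valid_step (lang x) w q"
    and "exit_word (lang x) w q p r s"
    and "exit_word (lang x) w q p' r' s'"
    and "subword x i (i + length (p @ wpow w q r @ s) - 1) = p @ wpow w q r @ s"
    and "subword x i' (i' + length (p' @ wpow w q r' @ s') - 1) = p' @ wpow w q r' @ s'"
    and "i < i'"
  shows "i' \<ge> i + length (p @ wpow w q r @ s) - length w
       \<and> occ (subword x i (i' + length (p' @ wpow w q r' @ s') - 1)) w \<ge> r + r'"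
proof -
  have so: "step_ok w q" using assms(2) by (simp add: minimal_valid_step_def valid_step_def)
  from so have q1: "1 \<le> q" and qn: "2*q \<le> length w" by (auto simp: step_ok_def)
  define Z where "Z = length (p @ wpow w q r @ s)"
  define Z' where "Z' = length (p' @ wpow w q r' @ s')"
  define n where "n = length w"
  note E1 = exit_facts[OF so assms(3) assms(5), folded Z_def]
  note E2 = exit_facts[OF so assms(4) assms(6), folded Z'_def]
  have lZ: "Z = length p + n + (r-1)*q + length s" using E1(1) by (simp add: n_def)
  have lZ': "Z' = length p' + n + (r'-1)*q + length s'" using E2(1) by (simp add: n_def)
  have a1: "1 \<le> length p" and b1: "1 \<le> length s" and r1: "1 \<le> r" using E1 by auto
  have a1': "1 \<le> length p'" and b1': "1 \<le> length s'" and r1': "1 \<le> r'" using E2 by auto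
  have qn': "2*q \<le> n" using qn by (simp add: n_def)
  have Zq: "n + 2 \<le> Z" using lZ a1 b1 by linarith
  have Zq': "n + 2 \<le> Z'" using lZ' a1' b1' by linarith
  have A: "\<And>t. i+1 \<le> t \<Longrightarrow> t + q + 2 \<le> i + Z \<Longrightarrow> x t = x (t+q)" using E1(5) by blast
  have B': "x i' \<noteq> x (i'+q)" using E2(6) .
  have C': "x (i' + Z' - 1) \<noteq> x (i' + Z' - 1 - q)" using E2(7) .
  have ee: "i + Z < i' + Z'"
  proof (rule ccontr)
    assume "\<not> i + Z < i' + Z'"
    then have le: "i' + Z' \<le> i + Z" by simp
    show False
    proof (cases "i' + Z' < i + Z")
      case True
      define t where "t = i' + Z' - 1 - q"
      have "i + 1 \<le> t" "t + q + 2 \<le> i + Z" using True assms(7) Zq' qn' unfolding t_def by linarith+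
      then have "x t = x (t + q)" by (rule A)
      moreover have "t + q = i' + Z' - 1" using Zq' qn' unfolding t_def by linarith
      ultimately show False using C' unfolding t_def by simp
    next
      case False
      then have "i' + q + 2 \<le> i + Z" using le Zq' qn' by linarith
      then have "x i' = x (i'+q)" using A[of i'] assms(7) by simp
      then show False using B' by simp
    qed
  qed
  have iq: "i + Z \<le> i' + q + 1"
  proof (rule ccontr)
    assume "\<not> i + Z \<le> i' + q + 1"
    then have "i' + q + 2 \<le> i + Z" by simp
    then have "x i' = x (i'+q)" using A[of i'] assms(7) by simp
    then show False using B' by simp
  qed
  have part1: "i' \<ge> i + Z - n" using iq qn' q1 by linarith
  define y where "y = subword x i (i' + Z' - 1)"
  have ly: "length y = i' + Z' - i" using assms(7) Zq' by (simp add: y_def subword_def)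
  have yx: "\<And>m. m < length y \<Longrightarrow> y ! m = x (i + m)"
  proof -
    fix m assume "m < length y"
    then have "m < i' + Z' - i" using ly by simp
    then show "y ! m = x (i + m)" unfolding y_def subword_def using assms(7) Zq'
      by (simp add: nth_map_upt)
  qed
  define S where "S = {j. j + length w \<le> length y \<and> take (length w) (drop j y) = w}"
  have finS: "finite S" unfolding S_def by (rule finite_subset[of _ "{..length y}"]) auto
  define T1 where "T1 = (\<lambda>k. length p + q*k) ` {..<r}"
  define T2 where "T2 = (\<lambda>k. i' - i + length p' + q*k) ` {..<r'}"
  have T1S: "T1 \<subseteq> S"
  proof
    fix j assume "j \<in> T1"
    then obtain k where k: "k < r" and j: "j = length p + q*k" unfolding T1_def by auto
    have "k \<le> r - 1" using k by linarith
    then have qk: "q*k \<le> (r-1)*q" by (metis mult.commute mult_le_mono2)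
    have jl: "j + length w \<le> length y" using j qk lZ ly ee b1 unfolding n_def by linarith
    show "j \<in> S" unfolding S_def
    proof (rule occ_mem[OF jl], intro allI impI)
      fix t assume t: "t < length w"
      have "y ! (j + t) = x (i + (j + t))" using yx jl t by simp
      also have "\<dots> = x (i + length p + q*k + t)" using j by (simp add: add.assoc)
      also have "\<dots> = w ! t" using E1(8) k t by blast
      finally show "y ! (j + t) = w ! t" .
    qed
  qed
  have T2S: "T2 \<subseteq> S"
  proof
    fix j assume "j \<in> T2"
    then obtain k where k: "k < r'" and j: "j = i' - i + length p' + q*k" unfolding T2_def by auto
    have "k \<le> r' - 1" using k by linarith
    then have qk: "q*k \<le> (r'-1)*q" by (metis mult.commute mult_le_mono2)
    have jl: "j + length w \<le> length y" using j qk lZ' ly assms(7) b1' unfolding n_def by linarith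
    show "j \<in> S" unfolding S_def
    proof (rule occ_mem[OF jl], intro allI impI)
      fix t assume t: "t < length w"
      have "y ! (j + t) = x (i + (j + t))" using yx jl t by simp
      also have "i + (j + t) = i' + length p' + q*k + t" using j assms(7) by simp
      also have "x \<dots> = w ! t" using E2(8) k t by blast
      finally show "y ! (j + t) = w ! t" .
    qed
  qed
  have disj: "T1 \<inter> T2 = {}"
  proof -
    have "\<forall>j\<in>T1. j < i' - i"
    proof
      fix j assume "j \<in> T1"
      then obtain k where k: "k < r" and j: "j = length p + q*k" unfolding T1_def by auto
      have "k \<le> r - 1" using k by linarith
      then have qk: "q*k \<le> (r-1)*q" by (metis mult.commute mult_le_mono2)
      show "j < i' - i" using j qk lZ iq qn' q1 b1 assms(7) by linarith
    qed
    moreover have "\<forall>j\<in>T2. i' - i \<le> j" unfolding T2_def by auto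
    ultimately show ?thesis by fastforce
  qed
  have inj1: "inj_on (\<lambda>k. length p + q*k) {..<r}" using q1 by (auto simp: inj_on_def)
  have inj2: "inj_on (\<lambda>k. i' - i + length p' + q*k) {..<r'}" using q1 by (auto simp: inj_on_def)
  have cT: "card (T1 \<union> T2) = r + r'"
  proof -
    have "finite T1" "finite T2" unfolding T1_def T2_def by auto
    then have "card (T1 \<union> T2) = card T1 + card T2" using disj by (rule card_Un_disjoint)
    also have "card T1 = r" unfolding T1_def using card_image[OF inj1] by simp
    also have "card T2 = r'" unfolding T2_def using card_image[OF inj2] by simp
    finally show ?thesis .
  qed
  have "card (T1 \<union> T2) \<le> card S" using T1S T2S finS by (intro card_mono) auto
  then have part2: "occ y w \<ge> r + r'" using cT by (simp add: occ_def S_def)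
  show ?thesis using part1 part2 by (simp add: Z_def Z'_def n_def y_def)
qed

end
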